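(* Let $f$ be a harmonic function on $K$, let $[v,w]$ be any edge of any graph $G_m$ (in particular $[p_1,p_2]$), and let $g(t)=f(v+t(w-v))$, $t\in[0,1]$. Then $g$ is differentiable at $t=\frac13$ and $g'(\frac13)=0$. In particular, for the edge $[p_1,p_2]\cong[0,1]$, $(f|_{[0,1]})'(\frac13)=0$.
   Context: Let $p_0,p_1,p_2$ be the vertices of a unit equilateral triangle in $\mathbb{R}^2$, $F_i(x)=(x+p_i)/2$, and $K$ the Sierpinski gasket (the attractor of $F_0,F_1,F_2$). For words $w$ of length $m$, $F_w=F_{w_1}\circ\cdots\circ F_{w_m}$; the minimal triangles of the graph $G_m$ are the triangles with vertices $F_w(p_0),F_w(p_1),F_w(p_2)$, and the edges of $G_m$ are their sides (segments of length $2^{-m}$ contained in $K$). A continuous $f:K\to\mathbb{R}$ is harmonic if for every $m\ge0$ and every minimal triangle of $G_m$ with vertices $v_i,v_j,v_k$, the value at the midpoint $v_{ij}$ of $[v_i,v_j]$ is $\frac15(2f(v_i)+2f(v_j)+f(v_k))$. The edge $[p_1,p_2]$ is identified with $[0,1]$ via $t\mapsto p_1+t(p_2-p_1)$. *)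

theory Defs
  imports "HOL-Analysis.Analysis"
begin

text \<open>The vertices p 0, p 1, p 2 of the triangle are a parameter p :: nat => real^2.
  Contraction F_i(x) = (x + p_i)/2.\<close>
definition sgF :: "(nat \<Rightarrow> real^2) \<Rightarrow> nat \<Rightarrow> real^2 \<Rightarrow> real^2" where
  "sgF p i x = (1/2) *\<^sub>R (x + p i)"

definition sgFw :: "(nat \<Rightarrow> real^2) \<Rightarrow> nat list \<Rightarrow> real^2 \<Rightarrow> real^2" where
  "sgFw p ws = foldr (\<lambda>i g. sgF p i \<circ> g) ws id"

definition sg_words :: "nat \<Rightarrow> nat list set" where
  "sg_words m = {ws. length ws = m \<and> set ws \<subseteq> {..<3}}"

definition sg_K :: "(nat \<Rightarrow> real^2) \<Rightarrow> (real^2) set" where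
  "sg_K p = (THE K. compact K \<and> K \<noteq> {} \<and> K = (\<Union>i<3. sgF p i ` K))"

definition sg_harmonic :: "(nat \<Rightarrow> real^2) \<Rightarrow> (real^2 \<Rightarrow> real) \<Rightarrow> bool" where
  "sg_harmonic p f \<longleftrightarrow>
     continuous_on (sg_K p) f \<and>
     (\<forall>m. \<forall>ws\<in>sg_words m. \<forall>i<3. \<forall>j<3. \<forall>k<3. i \<noteq> j \<and> j \<noteq> k \<and> i \<noteq> k \<longrightarrow>
        f (midpoint (sgFw p ws (p i)) (sgFw p ws (p j))) =
          (2 * f (sgFw p ws (p i)) + 2 * f (sgFw p ws (p j)) + f (sgFw p ws (p k))) / 5)"

end

theory Submission
  imports Defs
begin


lemma sgFw_Nil[simp]: "sgFw p [] = id" by (simp add: sgFw_def)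
lemma sgFw_Cons[simp]: "sgFw p (a#u) x = sgF p a (sgFw p u x)" by (simp add: sgFw_def)
lemma sgFw_append[simp]: "sgFw p (u@w) x = sgFw p u (sgFw p w x)"
  by (induct u) auto

lemma sgFw_affine: "sgFw p u (x + t *\<^sub>R (y - x)) = sgFw p u x + t *\<^sub>R (sgFw p u y - sgFw p u x)"
proof (induct u)
  case Nil then show ?case by simp
next
  case (Cons a u)
  show ?case by (simp only: sgFw_Cons Cons) (simp add: sgF_def algebra_simps)
qed

lemma sgF_dist: "dist (sgF p a x) (sgF p a y) = (1/2) * dist x y"
proof -
  have "sgF p a x - sgF p a y = (1/2) *\<^sub>R (x - y)" by (simp add: sgF_def algebra_simps)
  then show ?thesis by (simp add: dist_norm)
qed

lemma sgFw_dist: "dist (sgFw p u x) (sgFw p u y) = (1/2)^length u * dist x y"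
  by (induct u) (auto simp: sgF_dist)

lemma sgF_cont: "continuous_on A (sgF p a)"
  unfolding sgF_def by (intro continuous_intros)

definition sgV :: "(nat \<Rightarrow> real^2) \<Rightarrow> (real^2) set" where
  "sgV p = {sgFw p u (p a) | u a. set u \<subseteq> {..<3} \<and> a < 3}"

lemma sgV_bounded: "bounded (sgV p)"
proof -
  define B where "B = norm (p 0) + norm (p 1) + norm (p 2)"
  have pb: "norm (p a) \<le> B" if "a < 3" for a
  proof -
    have "a = 0 \<or> a = 1 \<or> a = 2" using that by auto
    then show ?thesis unfolding B_def by auto
  qed
  have "norm (sgFw p u x) \<le> B" if "set u \<subseteq> {..<3}" "norm x \<le> B" for u x
    using that
  proof (induct u)
    case Nil then show ?case by simp
  next
    case (Cons a u)
    then have h: "norm (sgFw p u x) \<le> B" "norm (p a) \<le> B" using pb by auto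
    have "norm (sgF p a (sgFw p u x)) \<le> (1/2) * (norm (sgFw p u x) + norm (p a))"
      unfolding sgF_def by (simp add: norm_triangle_ineq)
    then show ?case using h by simp
  qed
  then have "\<forall>y\<in>sgV p. norm y \<le> B" unfolding sgV_def using pb by auto
  then show ?thesis unfolding bounded_iff by blast
qed

lemma sgV_union: "(\<Union>i<3. sgF p i ` sgV p) = sgV p"
proof
  show "(\<Union>i<3. sgF p i ` sgV p) \<subseteq> sgV p"
  proof clarify
    fix i y assume "i < (3::nat)" "y \<in> sgV p"
    then obtain u a where "y = sgFw p u (p a)" "set u \<subseteq> {..<3}" "a < 3" unfolding sgV_def by auto
    then show "sgF p i y \<in> sgV p" unfolding sgV_def using \<open>i<3\<close>
      by (auto intro!: exI[of _ "i#u"] exI[of _ a])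
  qed
next
  show "sgV p \<subseteq> (\<Union>i<3. sgF p i ` sgV p)"
  proof
    fix y assume "y \<in> sgV p"
    then obtain u a where y: "y = sgFw p u (p a)" "set u \<subseteq> {..<3}" "a < 3" unfolding sgV_def by auto
    show "y \<in> (\<Union>i<3. sgF p i ` sgV p)"
    proof (cases u)
      case Nil
      have "sgF p a (p a) = p a" by (simp add: sgF_def scaleR_2[symmetric] del: scaleR_2)
      moreover have "p a \<in> sgV p" unfolding sgV_def using y by (auto intro!: exI[of _ "[]"])
      ultimately have "p a \<in> sgF p a ` sgV p" by (metis image_eqI)
      then show ?thesis using y Nil by auto
    next
      case (Cons b u')
      have "sgFw p u' (p a) \<in> sgV p" unfolding sgV_def using y Cons by auto
      then show ?thesis using y Cons by auto
    qed
  qed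
qed

lemma sgF_closure: assumes "bounded A" shows "sgF p i ` closure A = closure (sgF p i ` A)"
proof
  show "sgF p i ` closure A \<subseteq> closure (sgF p i ` A)"
    by (rule image_closure_subset) (auto simp: sgF_cont closure_subset)
  have "compact (sgF p i ` closure A)"
    using assms by (intro compact_continuous_image sgF_cont) (simp add: compact_closure)
  then have "closed (sgF p i ` closure A)" by (rule compact_imp_closed)
  moreover have "sgF p i ` A \<subseteq> sgF p i ` closure A" using closure_subset by blast
  ultimately show "closure (sgF p i ` A) \<subseteq> sgF p i ` closure A" by (rule closure_minimal[rotated])
qed

lemma three_union: "(\<Union>i<3. X i) = X 0 \<union> X 1 \<union> X (2::nat)"
proof -
  have "{..<3::nat} = {0,1,2}" by auto
  then show ?thesis by auto
qed

lemma attractor_exists: "compact (closure (sgV p)) \<and> closure (sgV p) \<noteq> {} \<and>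
   closure (sgV p) = (\<Union>i<3. sgF p i ` closure (sgV p))"
proof (intro conjI)
  show "compact (closure (sgV p))" using sgV_bounded by (simp add: compact_closure)
  have "p 0 \<in> sgV p" unfolding sgV_def by (auto intro!: exI[of _ "[]"])
  then show "closure (sgV p) \<noteq> {}" using closure_subset by blast
  have "(\<Union>i<3. sgF p i ` closure (sgV p)) = (\<Union>i<3. closure (sgF p i ` sgV p))"
    using sgF_closure[OF sgV_bounded] by simp
  also have "\<dots> = closure (\<Union>i<3. sgF p i ` sgV p)"
    unfolding three_union by (simp add: closure_Un)
  also have "\<dots> = closure (sgV p)" using sgV_union by simp
  finally show "closure (sgV p) = (\<Union>i<3. sgF p i ` closure (sgV p))" by simp
qed

lemma attractor_unique:
  assumes K: "compact K" "K \<noteq> {}" "K = (\<Union>i<3. sgF p i ` K)"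
  shows "K = closure (sgV p)"
proof
  have sub: "sgF p i x \<in> K" if "i < 3" "x \<in> K" for i x
  proof -
    have "sgF p i x \<in> (\<Union>i<3. sgF p i ` K)" using that by auto
    then show ?thesis by (subst K(3))
  qed
  have clK: "closed K" using K(1) by (rule compact_imp_closed)
  obtain x0 where x0: "x0 \<in> K" using K(2) by auto
  have pK: "p a \<in> K" if a: "a < 3" for a
  proof -
    define s where "s n = (sgF p a ^^ n) x0" for n
    have fix0: "sgF p a (p a) = p a" by (simp add: sgF_def scaleR_2[symmetric] del: scaleR_2)
    have sK: "s n \<in> K" for n unfolding s_def by (induct n) (auto simp: x0 sub a)
    have sd: "dist (s n) (p a) = (1/2)^n * dist x0 (p a)" for n
    proof (induct n)
      case 0 then show ?case by (simp add: s_def)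
    next
      case (Suc n)
      have "dist (s (Suc n)) (p a) = dist (sgF p a (s n)) (sgF p a (p a))"
        by (simp add: s_def fix0)
      also have "\<dots> = (1/2) * dist (s n) (p a)" by (rule sgF_dist)
      finally show ?case using Suc by simp
    qed
    have "(\<lambda>n. (1/2::real)^n * dist x0 (p a)) \<longlonglongrightarrow> 0"
      by (intro tendsto_mult_left_zero LIMSEQ_realpow_zero) auto
    then have "(\<lambda>n. dist (s n) (p a)) \<longlonglongrightarrow> 0" by (simp add: sd)
    then have "s \<longlonglongrightarrow> p a" by (rule tendsto_dist_iff[THEN iffD2])
    then show ?thesis by (rule closed_sequentially[OF clK sK])
  qed
  have VK: "sgFw p u (p a) \<in> K" if "set u \<subseteq> {..<3}" "a < 3" for u a
    using that by (induct u) (auto simp: pK sub)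
  then have "sgV p \<subseteq> K" unfolding sgV_def by auto
  then show "closure (sgV p) \<subseteq> K" using clK by (rule closure_minimal)
  show "K \<subseteq> closure (sgV p)"
  proof
    fix x assume xK: "x \<in> K"
    have dec: "\<exists>u y. set u \<subseteq> {..<3} \<and> length u = n \<and> y \<in> K \<and> x = sgFw p u y" for n
    proof (induct n)
      case 0 then show ?case using xK by (auto intro!: exI[of _ "[]"])
    next
      case (Suc n)
      then obtain u y where uy: "set u \<subseteq> {..<3}" "length u = n" "y \<in> K" "x = sgFw p u y" by auto
      then have "y \<in> (\<Union>i<3. sgF p i ` K)" by (subst K(3)[symmetric]) simp
      then obtain i z where iz: "i < 3" "z \<in> K" "y = sgF p i z" by auto
      show ?case using uy iz by (intro exI[of _ "u@[i]"] exI[of _ z]) auto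
    qed
    have "bounded K" using K(1) by (rule compact_imp_bounded)
    then obtain C where C: "\<forall>y\<in>K. dist (p 0) y \<le> C" using bounded_any_center[of K "p 0"] by blast
    define C' where "C' = max C 0 + 1"
    have C'pos: "C' > 0" unfolding C'_def by simp
    show "x \<in> closure (sgV p)" unfolding closure_approachable
    proof (intro allI impI)
      fix e :: real assume e: "e > 0"
      obtain n where n: "(1/2::real)^n < e / C'" using real_arch_pow_inv[of "e/C'" "1/2"] e C'pos by auto
      obtain u y where uy: "set u \<subseteq> {..<3}" "length u = n" "y \<in> K" "x = sgFw p u y" using dec by blast
      have "sgFw p u (p 0) \<in> sgV p" unfolding sgV_def using uy by (auto intro!: exI[of _ u] exI[of _ 0])
      moreover have "dist (sgFw p u (p 0)) x < e"
      proof -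
        have "dist (sgFw p u (p 0)) x = (1/2)^n * dist (p 0) y" using uy sgFw_dist by simp
        also have "\<dots> \<le> (1/2)^n * C'" using C uy(3) unfolding C'_def
          by (intro mult_left_mono) auto
        also have "\<dots> < e" using n C'pos by (simp add: pos_less_divide_eq)
        finally show ?thesis .
      qed
      ultimately show "\<exists>y\<in>sgV p. dist y x < e" by blast
    qed
  qed
qed

lemma sgK_eq: "sg_K p = closure (sgV p)"
  unfolding sg_K_def
  apply (rule the_equality)
  using attractor_exists apply blast
  using attractor_unique by blast




lemma sgF_pp: "sgF p a (p b) = p a + (1/2) *\<^sub>R (p b - p a)"
  by (simp add: sgF_def vec_eq_iff field_simps)

locale sg_edge =
  fixes p :: "nat \<Rightarrow> real^2" and f :: "real^2 \<Rightarrow> real" and i j k :: nat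
  assumes harm: "sg_harmonic p f"
    and ijk: "i < 3" "j < 3" "k < 3" "i \<noteq> j" "j \<noteq> k" "i \<noteq> k"
begin

definition valid :: "nat list \<Rightarrow> bool" where "valid u \<longleftrightarrow> set u \<subseteq> {..<3}"
definition E :: "nat list \<Rightarrow> real \<Rightarrow> real^2" where
  "E u t = sgFw p u (p i) + t *\<^sub>R (sgFw p u (p j) - sgFw p u (p i))"
definition A where "A u = f (sgFw p u (p i))"
definition B where "B u = f (sgFw p u (p j))"
definition C where "C u = f (sgFw p u (p k))"
definition lo where "lo u = min (A u) (min (B u) (C u))"
definition hi where "hi u = max (A u) (max (B u) (C u))"

lemma valid_app: "valid u \<Longrightarrow> a < 3 \<Longrightarrow> valid (u@[a])" by (auto simp: valid_def)
lemma valid_i: "valid u \<Longrightarrow> valid (u@[i])" and valid_j: "valid u \<Longrightarrow> valid (u@[j])"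
  using ijk by (auto simp: valid_app)

lemma harm_step:
  assumes "valid u" "a < 3" "b < 3" "c < 3" "a \<noteq> b" "b \<noteq> c" "a \<noteq> c"
  shows "f (sgFw p (u@[a]) (p b)) = (2 * f (sgFw p u (p a)) + 2 * f (sgFw p u (p b)) + f (sgFw p u (p c))) / 5"
proof -
  have w: "u \<in> sg_words (length u)" using assms(1) by (simp add: sg_words_def valid_def)
  have "sgFw p (u@[a]) (p b) = sgFw p u (p a) + (1/2) *\<^sub>R (sgFw p u (p b) - sgFw p u (p a))"
    by (simp add: sgF_pp sgFw_affine)
  also have "\<dots> = midpoint (sgFw p u (p a)) (sgFw p u (p b))"
    by (simp add: midpoint_def algebra_simps)
  finally have e: "sgFw p (u@[a]) (p b) = midpoint (sgFw p u (p a)) (sgFw p u (p b))" .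
  show ?thesis unfolding e using harm w assms(2-) unfolding sg_harmonic_def by blast
qed

lemma sgF_fix[simp]: "sgF p a (p a) = p a"
  by (simp add: sgF_def scaleR_2[symmetric] del: scaleR_2)
lemma fix_step: "sgFw p (u@[a]) (p a) = sgFw p u (p a)"
  by simp

lemma vals_i: assumes "valid u"
  shows "A (u@[i]) = A u" "B (u@[i]) = (2 * A u + 2 * B u + C u) / 5"
    "C (u@[i]) = (2 * A u + 2 * C u + B u) / 5"
  using harm_step[OF assms, of i j k] harm_step[OF assms, of i k j] ijk
  by (auto simp: A_def B_def C_def fix_step)

lemma vals_j: assumes "valid u"
  shows "B (u@[j]) = B u" "A (u@[j]) = (2 * B u + 2 * A u + C u) / 5"
    "C (u@[j]) = (2 * B u + 2 * C u + A u) / 5"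
  using harm_step[OF assms, of j i k] harm_step[OF assms, of j k i] ijk
  by (auto simp: A_def B_def C_def fix_step)

lemma lo_i: "valid u \<Longrightarrow> lo u \<le> lo (u@[i])" and hi_i: "valid u \<Longrightarrow> hi (u@[i]) \<le> hi u"
  and lo_j: "valid u \<Longrightarrow> lo u \<le> lo (u@[j])" and hi_j: "valid u \<Longrightarrow> hi (u@[j]) \<le> hi u"
  by (auto simp: lo_def hi_def vals_i vals_j)

lemma E_i: "E (u@[i]) t = E u (t/2)"
proof -
  have h: "sgFw p u (sgF p i (p j)) = sgFw p u (p i) + (1/2) *\<^sub>R (sgFw p u (p j) - sgFw p u (p i))"
    by (simp only: sgF_pp sgFw_affine)
  show ?thesis unfolding E_def by (simp add: h algebra_simps)
qed

lemma E_j: "E (u@[j]) t = E u ((1+t)/2)"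
proof -
  have h: "sgFw p u (sgF p j (p i)) = sgFw p u (p j) + (1/2) *\<^sub>R (sgFw p u (p i) - sgFw p u (p j))"
    by (simp only: sgF_pp sgFw_affine)
  show ?thesis unfolding E_def by (simp add: h vec_eq_iff) (simp add: field_simps)
qed

lemma K_closed: "closed (sg_K p)" unfolding sgK_eq by (rule closed_closure)
lemma VK: assumes "valid u" "a < 3" shows "sgFw p u (p a) \<in> sg_K p"
proof -
  have "sgFw p u (p a) \<in> sgV p" using assms unfolding sgV_def valid_def by blast
  then show ?thesis unfolding sgK_eq by (rule closure_subset[THEN subsetD])
qed
lemma f_cont: "continuous_on (sg_K p) f" using harm unfolding sg_harmonic_def by blast

lemma dyadic: "\<forall>u. valid u \<longrightarrow> (\<forall>q. q \<le> (2::nat)^n \<longrightarrow>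
   E u (real q / 2^n) \<in> sg_K p \<and> lo u \<le> f (E u (real q / 2^n)) \<and> f (E u (real q / 2^n)) \<le> hi u)"
proof (induct n)
  case 0
  show ?case
  proof (intro allI impI)
    fix u q assume u: "valid u" and q: "q \<le> (2::nat)^0"
    then have "q = 0 \<or> q = 1" by auto
    moreover have "E u 0 = sgFw p u (p i)" "E u 1 = sgFw p u (p j)" by (simp_all add: E_def)
    ultimately show "E u (real q / 2^0) \<in> sg_K p \<and> lo u \<le> f (E u (real q / 2^0)) \<and> f (E u (real q / 2^0)) \<le> hi u"
      using VK[OF u] ijk by (auto simp: lo_def hi_def A_def B_def)
  qed
next
  case (Suc n)
  show ?case
  proof (intro allI impI)
    fix u q assume u: "valid u" and q: "q \<le> (2::nat)^Suc n"
    show "E u (real q / 2^Suc n) \<in> sg_K p \<and> lo u \<le> f (E u (real q / 2^Suc n)) \<and> f (E u (real q / 2^Suc n)) \<le> hi u"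
    proof (cases "q \<le> 2^n")
      case True
      have e: "E u (real q / 2^Suc n) = E (u@[i]) (real q / 2^n)" by (simp add: E_i mult.commute)
      show ?thesis unfolding e using Suc[rule_format, OF valid_i[OF u] True] lo_i[OF u] hi_i[OF u] by auto
    next
      case False
      define q' where "q' = q - 2^n"
      have q': "q' \<le> 2^n" using q False unfolding q'_def by auto
      have rq: "real q = real q' + 2^n" using False unfolding q'_def by auto
      have e: "E u (real q / 2^Suc n) = E (u@[j]) (real q' / 2^n)" unfolding E_j rq
        by (simp add: field_simps)
      show ?thesis unfolding e using Suc[rule_format, OF valid_j[OF u] q'] lo_j[OF u] hi_j[OF u] by auto
    qed
  qed
qed

lemma edge_bound:
  assumes u: "valid u" and t: "0 \<le> t" "t \<le> 1"
  shows "E u t \<in> sg_K p \<and> lo u \<le> f (E u t) \<and> f (E u t) \<le> hi u"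
proof -
  define q where "q n = nat \<lfloor>t * 2^n\<rfloor>" for n :: nat
  define d where "d n = real (q n) / 2^n" for n :: nat
  have qle: "q n \<le> 2^n" for n
  proof -
    have "t * 2^n \<le> 2^n" using t by simp
    then have "\<lfloor>t * 2^n\<rfloor> \<le> 2^n" by (metis floor_le_numeral floor_mono floor_of_nat of_nat_numeral of_int_of_nat_eq le_floor_iff of_nat_power numeral_pow)
    then show ?thesis unfolding q_def by (simp add: nat_le_iff)
  qed
  have dist_d: "norm (d n - t) \<le> (1/2)^n" for n
  proof -
    have tp: "0 \<le> t * 2^n" using t by simp
    have rq: "real (q n) = of_int \<lfloor>t * 2^n\<rfloor>" unfolding q_def using tp by simp
    have a: "of_int \<lfloor>t * 2^n\<rfloor> \<le> t * 2^n" by (rule of_int_floor_le)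
    have b: "t * 2^n < of_int \<lfloor>t * 2^n\<rfloor> + 1" by (rule real_of_int_floor_add_one_gt)
    have "d n - t = (of_int \<lfloor>t * 2^n\<rfloor> - t * 2^n) / 2^n" unfolding d_def rq by (simp add: field_simps)
    moreover have "\<bar>of_int \<lfloor>t * 2^n\<rfloor> - t * 2^n\<bar> \<le> 1" using a b by linarith
    ultimately have "\<bar>d n - t\<bar> \<le> 1 / 2^n" by (simp add: abs_divide divide_right_mono)
    then show ?thesis by (simp add: power_one_over)
  qed
  have "(\<lambda>n. d n - t) \<longlonglongrightarrow> 0"
    by (rule Lim_null_comparison[OF always_eventually[OF allI[OF dist_d]]]) (rule LIMSEQ_realpow_zero, auto)
  then have dt: "d \<longlonglongrightarrow> t" by (simp add: LIM_zero_iff)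
  have Et: "(\<lambda>n. E u (d n)) \<longlonglongrightarrow> E u t" unfolding E_def by (intro tendsto_intros dt)
  have dd: "E u (d n) \<in> sg_K p \<and> lo u \<le> f (E u (d n)) \<and> f (E u (d n)) \<le> hi u" for n
    unfolding d_def using dyadic[rule_format, OF u qle] by blast
  have EK: "E u t \<in> sg_K p" using closed_sequentially[OF K_closed _ Et] dd by blast
  have "((f \<circ> (\<lambda>n. E u (d n))) \<longlonglongrightarrow> f (E u t))"
    using f_cont[unfolded continuous_on_sequentially, rule_format, of "E u t" "\<lambda>n. E u (d n)"] EK dd Et by blast
  then have ft: "(\<lambda>n. f (E u (d n))) \<longlonglongrightarrow> f (E u t)" by (simp add: o_def)
  have "lo u \<le> f (E u t)" by (rule LIMSEQ_le_const[OF ft]) (use dd in auto)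
  moreover have "f (E u t) \<le> hi u" by (rule LIMSEQ_le_const2[OF ft]) (use dd in auto)
  ultimately show ?thesis using EK by blast
qed

end



context sg_edge begin

primrec chn :: "nat list \<Rightarrow> nat \<Rightarrow> nat list" where
  "chn ws 0 = ws"
| "chn ws (Suc n) = (chn ws n @ [i]) @ [j]"

lemma valid_chn: "valid ws \<Longrightarrow> valid (chn ws n)"
  by (induct n) (auto simp: valid_def ijk)

lemma E_ij: "E (u@[i,j]) s = E u ((1+s)/4)"
proof -
  have "E (u@[i,j]) s = E ((u@[i])@[j]) s" by simp
  also have "\<dots> = E u ((1+s)/4)" unfolding E_j E_i by (simp add: field_simps)
  finally show ?thesis .
qed

lemma E_chn: "E (chn ws n) s = E ws (1/3 + (s - 1/3) / 4^n)"
proof (induct n arbitrary: s)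
  case 0 then show ?case by simp
next
  case (Suc n)
  have "E (chn ws (Suc n)) s = E ws (1/3 + ((1+s)/4 - 1/3) / 4^n)" by (simp add: E_ij Suc)
  also have "1/3 + ((1+s)/4 - 1/3) / 4^n = 1/3 + (s - 1/3) / 4^Suc n" by (simp add: field_simps)
  finally show ?case .
qed

definition D where "D u = max \<bar>B u - A u\<bar> \<bar>C u - A u\<bar>"

lemma D_nonneg: "0 \<le> D u" by (simp add: D_def)

lemma osc: "hi u - lo u \<le> 2 * D u"
  unfolding hi_def lo_def D_def by (auto simp: abs_if max_def min_def)

lemma D_step: assumes u: "valid u" shows "D ((u@[i])@[j]) \<le> 6/25 * D u"
proof -
  have ui: "valid (u@[i])" by (rule valid_i[OF u])
  define x where "x = B u - A u"
  define y where "y = C u - A u"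
  have x: "\<bar>x\<bar> \<le> D u" and y: "\<bar>y\<bar> \<le> D u" unfolding x_def y_def D_def by auto
  have e1: "B ((u@[i])@[j]) - A ((u@[i])@[j]) = (5 * x + y) / 25"
    unfolding x_def y_def vals_j[OF ui] vals_i[OF u] by (simp add: field_simps)
  have e2: "C ((u@[i])@[j]) - A ((u@[i])@[j]) = (x + 2 * y) / 25"
    unfolding x_def y_def vals_j[OF ui] vals_i[OF u] by (simp add: field_simps)
  have "\<bar>(5 * x + y) / 25\<bar> \<le> 6/25 * D u" using x y by (simp add: abs_le_iff; linarith)
  moreover have "\<bar>(x + 2 * y) / 25\<bar> \<le> 6/25 * D u" using x y by (simp add: abs_le_iff; linarith)
  ultimately show ?thesis unfolding D_def[of "(u@[i])@[j]"] e1 e2 by (rule max.boundedI)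
qed

lemma D_chn: "valid ws \<Longrightarrow> D (chn ws n) \<le> (6/25)^n * D ws"
proof (induct n)
  case 0 then show ?case by simp
next
  case (Suc n)
  have "D (chn ws (Suc n)) \<le> 6/25 * D (chn ws n)" using D_step[OF valid_chn[OF Suc.prems]] by simp
  also have "\<dots> \<le> 6/25 * ((6/25)^n * D ws)" using Suc by simp
  finally show ?case by simp
qed

lemma main_bound:
  assumes ws: "valid ws" and t: "\<bar>t - 1/3\<bar> \<le> (1/3) / 4^n"
  shows "\<bar>f (E ws t) - f (E ws (1/3))\<bar> \<le> 2 * (6/25)^n * D ws"
proof -
  define s where "s = 1/3 + 4^n * (t - 1/3)"
  have "\<bar>s - 1/3\<bar> = 4^n * \<bar>t - 1/3\<bar>" unfolding s_def by (simp add: abs_mult)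
  also have "\<dots> \<le> 4^n * ((1/3) / 4^n)" using t by (intro mult_left_mono) auto
  also have "\<dots> = 1/3" by simp
  finally have sb: "\<bar>s - 1/3\<bar> \<le> 1/3" .
  have s: "0 \<le> s" "s \<le> 1" using abs_le_D1[OF sb] abs_le_D2[OF sb] by linarith+
  have e1: "E (chn ws n) s = E ws t" unfolding E_chn s_def by simp
  have e2: "E (chn ws n) (1/3) = E ws (1/3)" unfolding E_chn by simp
  have vc: "valid (chn ws n)" by (rule valid_chn[OF ws])
  have b1: "lo (chn ws n) \<le> f (E ws t) \<and> f (E ws t) \<le> hi (chn ws n)"
    using edge_bound[OF vc s] e1 by simp
  have b2: "lo (chn ws n) \<le> f (E ws (1/3)) \<and> f (E ws (1/3)) \<le> hi (chn ws n)"
    using edge_bound[OF vc, of "1/3"] e2 by simp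
  have "\<bar>f (E ws t) - f (E ws (1/3))\<bar> \<le> hi (chn ws n) - lo (chn ws n)" using b1 b2 by linarith
  also have "\<dots> \<le> 2 * D (chn ws n)" by (rule osc)
  also have "\<dots> \<le> 2 * ((6/25)^n * D ws)" using D_chn[OF ws] by simp
  finally show ?thesis by simp
qed

lemma deriv_third:
  assumes ws: "valid ws"
  shows "((\<lambda>t. f (E ws t)) has_real_derivative 0) (at (1/3) within S)"
proof -
  let ?g = "\<lambda>t. f (E ws t)"
  define D0 where "D0 = D ws"
  have D0: "0 \<le> D0" unfolding D0_def by (rule D_nonneg)
  have "((\<lambda>y. (?g y - ?g (1/3)) / (y - 1/3)) \<longlongrightarrow> 0) (at (1/3))"
  proof (rule LIM_I)
    fix r :: real assume r: "0 < r"
    obtain N where N: "(24/25::real)^N < r / (24 * D0 + 1)"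
      using real_arch_pow_inv[of "r / (24 * D0 + 1)" "24/25"] r D0 by auto
    have NN: "24 * D0 * (24/25)^N < r"
    proof -
      have "24 * D0 * (24/25)^N \<le> (24 * D0 + 1) * (24/25)^N" by (simp add: mult_right_mono)
      also have "\<dots> < (24 * D0 + 1) * (r / (24 * D0 + 1))" using N D0 by (intro mult_strict_left_mono) auto
      also have "\<dots> = r" using D0 by simp
      finally show ?thesis .
    qed
    show "\<exists>s>0. \<forall>x. x \<noteq> 1/3 \<and> norm (x - 1/3) < s \<longrightarrow> norm ((?g x - ?g (1/3)) / (x - 1/3) - 0) < r"
    proof (intro exI[of _ "(1/3) * (1/4)^N"] conjI allI impI)
      show "0 < (1/3) * (1/4::real)^N" by simp
      fix x :: real assume x: "x \<noteq> 1/3 \<and> norm (x - 1/3) < (1/3) * (1/4)^N"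
      define \<rho> where "\<rho> = \<bar>x - 1/3\<bar>"
      have rho: "0 < \<rho>" "\<rho> < (1/3) * (1/4)^N" using x unfolding \<rho>_def by auto
      have ex: "\<exists>n. (1/3) * (1/4::real)^n < \<rho>"
      proof -
        obtain n where "(1/4::real)^n < 3 * \<rho>" using real_arch_pow_inv[of "3 * \<rho>" "1/4"] rho by auto
        then show ?thesis by (intro exI[of _ n]) simp
      qed
      define n0 where "n0 = (LEAST n. (1/3) * (1/4::real)^n < \<rho>)"
      have n0: "(1/3) * (1/4::real)^n0 < \<rho>" unfolding n0_def by (rule LeastI_ex[OF ex])
      have n0N: "N < n0"
      proof (rule ccontr)
        assume "\<not> N < n0"
        then have "(1/4::real)^N \<le> (1/4)^n0" by (intro power_decreasing) auto
        then show False using n0 rho by linarith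
      qed
      then obtain m where m: "n0 = Suc m" by (cases n0) auto
      have mN: "N \<le> m" using n0N m by simp
      have "\<not> (1/3) * (1/4::real)^m < \<rho>" using not_less_Least[of m "\<lambda>n. (1/3) * (1/4::real)^n < \<rho>"] m n0_def by simp
      then have rm: "\<bar>x - 1/3\<bar> \<le> (1/3) / 4^m" unfolding \<rho>_def by (simp add: power_one_over)
      have bnd: "\<bar>?g x - ?g (1/3)\<bar> \<le> 2 * (6/25)^m * D0" unfolding D0_def by (rule main_bound[OF ws rm])
      have lowr: "(1/4::real)^m < 12 * \<rho>" using n0 m by simp
      have "(6/25::real)^m = (24/25)^m * (1/4)^m" by (simp add: power_mult_distrib[symmetric])
      then have "\<bar>?g x - ?g (1/3)\<bar> \<le> 2 * D0 * (24/25)^m * (1/4)^m" using bnd by (simp add: mult_ac)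
      also have "\<dots> \<le> 2 * D0 * (24/25)^m * (12 * \<rho>)" using lowr D0
        by (intro mult_left_mono) auto
      also have "\<dots> \<le> 2 * D0 * (24/25)^N * (12 * \<rho>)" using mN D0 rho
        by (intro mult_right_mono mult_left_mono power_decreasing) auto
      also have "\<dots> = (24 * D0 * (24/25)^N) * \<rho>" by simp
      also have "\<dots> < r * \<rho>" using NN rho by simp
      finally have "\<bar>?g x - ?g (1/3)\<bar> < r * \<rho>" .
      then show "norm ((?g x - ?g (1/3)) / (x - 1/3) - 0) < r"
        using rho unfolding \<rho>_def by (simp add: abs_divide divide_less_eq)
    qed
  qed
  then have "(?g has_real_derivative 0) (at (1/3))" by (simp add: has_field_derivative_iff)
  then show ?thesis by (rule has_field_derivative_at_within)
qed

end

theorem theorem6: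
  fixes p :: "nat \<Rightarrow> real^2" and f :: "real^2 \<Rightarrow> real"
    and ws :: "nat list" and m i j :: nat and v w :: "real^2"
  assumes "\<forall>a<3. \<forall>b<3. a \<noteq> b \<longrightarrow> dist (p a) (p b) = 1"
    and "sg_harmonic p f"
    and "ws \<in> sg_words m" and "i < 3" and "j < 3" and "i \<noteq> j"
    and "v = sgFw p ws (p i)" and "w = sgFw p ws (p j)"
  shows "((\<lambda>t. f (v + t *\<^sub>R (w - v))) has_real_derivative 0) (at (1/3) within {0..1})"
proof -
  define k where "k = 3 - i - j"
  have k: "k < 3" "j \<noteq> k" "i \<noteq> k" using assms(4-6) unfolding k_def by presburger+
  interpret sg_edge p f i j k
    by unfold_locales (use assms(2,4,5,6) k in auto)
  have vw: "valid ws" using assms(3) by (simp add: sg_words_def valid_def)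
  have "(\<lambda>t. f (v + t *\<^sub>R (w - v))) = (\<lambda>t. f (E ws t))"
    unfolding E_def assms(7,8) ..
  then show ?thesis using deriv_third[OF vw] by simp
qed

end
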